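(* Let $\mathcal X$ be a normed space, $\mathcal Y=\{1,\dots,C\}$, and $\eta_c(\mathbf x)=p(y=c\mid\mathbf x)$ class-conditional probabilities, each $\lambda^{\eta}$-Lipschitz in $\mathbf x$. Let $\tilde{\mathbf x}_1,\dots,\tilde{\mathbf x}_b\in\mathcal X$ be fixed selected points and $l(\cdot,\cdot;A_{\mathbf s}):\mathcal X\times\mathcal Y\to[0,L]$ a loss such that $\mathbf x\mapsto l(\mathbf x,y;A_{\mathbf s})$ is $\lambda^l$-Lipschitz for each $y$ and $l(\tilde{\mathbf x}_k,y;A_{\mathbf s})=0$ for all $k$ and $y$. Then for every $\mathbf x\in\mathcal X$, $$\mathbb E_{y\sim p(\cdot\mid\mathbf x)}\big[l(\mathbf x,y;A_{\mathbf s})\big]\le\big(\lambda^l+\lambda^{\eta}LC\big)\,|\mathbf x-\pi(\mathbf x)|,$$ and consequently $$\mathbb E_{(\mathbf x,y)\sim p_{\mathcal Z}}\big[l(\mathbf x,y;A_{\mathbf s})\big]\le\big(\lambda^l+\lambda^{\eta}LC\big)\max_{k}\mathbb E_{\mathbf x\sim\mathbb N_{\mathbf s}(k)}\big[|\mathbf x-\tilde{\mathbf x}_k|\big].$$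
   Context: $\pi(\mathbf x)=\arg\min_{\tilde{\mathbf x}\in\{\tilde{\mathbf x}_1,\dots,\tilde{\mathbf x}_b\}}|\mathbf x-\tilde{\mathbf x}|$ (ties broken by a fixed rule). Coverage area $\mathbb N_{\mathbf s}(k)=\{\mathbf x:\pi(\mathbf x)=\tilde{\mathbf x}_k\}$; $\mathbf x\sim\mathbb N_{\mathbf s}(k)$ denotes the conditional distribution $p(\mathbf x\mid\pi(\mathbf x)=\tilde{\mathbf x}_k)$ of the marginal of $p_{\mathcal Z}$; the max is over $k$ with $p(\pi(\mathbf x)=\tilde{\mathbf x}_k)>0$. *)

theory Defs
  imports "HOL-Probability.Probability"
begin

definition coverage :: "('a \<Rightarrow> 'a) \<Rightarrow> (nat \<Rightarrow> 'a) \<Rightarrow> nat \<Rightarrow> 'a set" where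
  "coverage proj xt k = {x. proj x = xt k}"

text \<open>Conditional expectation of the distance to the k-th point, given that x lies in its
  coverage area (values in ennreal, so that it is well defined even if infinite).\<close>
definition cond_dist :: "'a::real_normed_vector measure \<Rightarrow> ('a \<Rightarrow> 'a) \<Rightarrow> (nat \<Rightarrow> 'a) \<Rightarrow> nat \<Rightarrow> ennreal" where
  "cond_dist M proj xt k =
     (\<integral>\<^sup>+ x \<in> coverage proj xt k. ennreal (norm (x - xt k)) \<partial>M) / emeasure M (coverage proj xt k)"

end

theory Submission
  imports Defs
begin

theorem mainTheorem3:
  fixes M :: "'a::real_normed_vector measure"
    and eta :: "nat \<Rightarrow> 'a \<Rightarrow> real"
    and l :: "'a \<Rightarrow> nat \<Rightarrow> real"
    and xt :: "nat \<Rightarrow> 'a"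
    and proj :: "'a \<Rightarrow> 'a"
    and C b :: nat and L lam_eta lam_l :: real
  assumes C: "C \<ge> 1" and b: "b \<ge> 1"
    and eta_nonneg: "\<And>c x. c \<in> {1..C} \<Longrightarrow> eta c x \<ge> 0"
    and eta_sum: "\<And>x. (\<Sum>c\<in>{1..C}. eta c x) = 1"
    and eta_lip: "\<And>c. c \<in> {1..C} \<Longrightarrow> lam_eta-lipschitz_on UNIV (eta c)"
    and l_range: "\<And>x y. y \<in> {1..C} \<Longrightarrow> 0 \<le> l x y \<and> l x y \<le> L"
    and l_lip: "\<And>y. y \<in> {1..C} \<Longrightarrow> lam_l-lipschitz_on UNIV (\<lambda>x. l x y)"
    and l_zero: "\<And>k y. k \<in> {1..b} \<Longrightarrow> y \<in> {1..C} \<Longrightarrow> l (xt k) y = 0"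
    and pi_in: "\<And>x. proj x \<in> xt ` {1..b}"
    and pi_min: "\<And>x k. k \<in> {1..b} \<Longrightarrow> norm (x - proj x) \<le> norm (x - xt k)"
    and prob: "prob_space M" and sets_M: "sets M = sets borel"
    and cov_meas: "\<And>k. k \<in> {1..b} \<Longrightarrow> coverage proj xt k \<in> sets M"
  shows "(\<forall>x. (\<Sum>c\<in>{1..C}. eta c x * l x c)
              \<le> (lam_l + lam_eta * L * real C) * norm (x - proj x))
       \<and> ennreal (\<integral>x. (\<Sum>c\<in>{1..C}. eta c x * l x c) \<partial>M)
            \<le> ennreal (lam_l + lam_eta * L * real C)
              * (MAX k\<in>{k\<in>{1..b}. measure M (coverage proj xt k) > 0}. cond_dist M proj xt k)"
proof -
  let ?f = "\<lambda>x. (\<Sum>c\<in>{1..C}. eta c x * l x c)"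
  define K where "K = lam_l + lam_eta * L * real C"
  define S where "S = {k\<in>{1..b}. measure M (coverage proj xt k) > 0}"
  define D where "D = (MAX k\<in>S. cond_dist M proj xt k)"
  interpret P: prob_space M by (rule prob)
  have L0: "0 \<le> L" using l_range[of 1] C by force
  have le0: "0 \<le> lam_l" using l_lip[of 1] C by (auto simp: lipschitz_on_def)
  have ee0: "0 \<le> lam_eta" using eta_lip[of 1] C by (auto simp: lipschitz_on_def)
  have K0: "0 \<le> K" unfolding K_def using L0 le0 ee0 by simp
  have pw: "?f x \<le> K * norm (x - proj x)" for x
  proof -
    obtain k where k: "k \<in> {1..b}" "proj x = xt k" using pi_in[of x] by blast
    have "?f x \<le> (\<Sum>c\<in>{1..C}. eta c x * (lam_l * norm (x - proj x)))"
    proof (rule sum_mono)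
      fix c assume c: "c \<in> {1..C}"
      have "dist (l x c) (l (proj x) c) \<le> lam_l * dist x (proj x)"
        using l_lip[OF c] by (auto simp: lipschitz_on_def)
      hence "l x c \<le> lam_l * norm (x - proj x)"
        using l_zero[OF k(1) c] k(2) by (simp add: dist_norm)
      thus "eta c x * l x c \<le> eta c x * (lam_l * norm (x - proj x))"
        using eta_nonneg[OF c] by (simp add: mult_left_mono)
    qed
    also have "\<dots> = lam_l * norm (x - proj x)"
      using eta_sum[of x] by (simp only: sum_distrib_right[symmetric])
    also have "\<dots> \<le> K * norm (x - proj x)"
      unfolding K_def using L0 ee0 by (intro mult_right_mono) auto
    finally show ?thesis .
  qed
  have f0: "0 \<le> ?f x" for x
    using eta_nonneg l_range by (intro sum_nonneg) (simp add: mult_nonneg_nonneg)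
  have spaceM: "space M = UNIV" using sets_eq_imp_space_eq[OF sets_M] by simp
  define Pt where "Pt = xt ` {1..b}"
  define cv where "cv p = {x. proj x = p}" for p
  have finP: "finite Pt" unfolding Pt_def by simp
  have cvk: "cv (xt k) = coverage proj xt k" for k by (simp add: cv_def coverage_def)
  have cvmeas: "cv p \<in> sets M" if "p \<in> Pt" for p
    using that cov_meas cvk unfolding Pt_def by auto
  have meas_g: "(\<lambda>x. ennreal (norm (x - p)) * indicator (cv p) x) \<in> borel_measurable M"
    if "p \<in> Pt" for p
  proof -
    have "(\<lambda>x. ennreal (norm (x - p))) \<in> borel_measurable M"
    proof -
      have "(\<lambda>x. norm (x - p)) \<in> borel_measurable borel" by (intro borel_measurable_continuous_onI continuous_intros)
      hence "(\<lambda>x. norm (x - p)) \<in> borel_measurable M" using measurable_cong_sets[OF sets_M refl, of "borel::real measure"] by simp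
      thus ?thesis by simp
    qed
    thus ?thesis using cvmeas[OF that] by (intro borel_measurable_times_ennreal) auto
  qed
  have step1: "ennreal (integral\<^sup>L M ?f) \<le> (\<integral>\<^sup>+ x. ennreal (?f x) \<partial>M)"
  proof (cases "integrable M ?f")
    case True
    then show ?thesis using nn_integral_eq_integral[OF True] f0 by simp
  next
    case False
    then show ?thesis by (simp add: not_integrable_integral_eq)
  qed
  have pw2: "ennreal (?f x) \<le> (\<Sum>p\<in>Pt. ennreal K * (ennreal (norm (x - p)) * indicator (cv p) x))" for x
  proof -
    have "(\<Sum>p\<in>Pt. ennreal K * (ennreal (norm (x - p)) * indicator (cv p) x))
        = (\<Sum>p\<in>Pt. if proj x = p then ennreal K * ennreal (norm (x - p)) else 0)"
      by (intro sum.cong) (auto simp: cv_def indicator_def)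
    also have "\<dots> = ennreal K * ennreal (norm (x - proj x))"
      using pi_in[of x] finP unfolding Pt_def by (simp add: sum.delta)
    also have "\<dots> = ennreal (K * norm (x - proj x))" using K0 by (simp add: ennreal_mult)
    finally show ?thesis using pw[of x] by (simp add: ennreal_leI)
  qed
  have step2: "(\<integral>\<^sup>+ x. ennreal (?f x) \<partial>M) \<le> (\<Sum>p\<in>Pt. ennreal K * (\<integral>\<^sup>+ x. ennreal (norm (x - p)) * indicator (cv p) x \<partial>M))"
  proof -
    have "(\<integral>\<^sup>+ x. ennreal (?f x) \<partial>M) \<le> (\<integral>\<^sup>+ x. (\<Sum>p\<in>Pt. ennreal K * (ennreal (norm (x - p)) * indicator (cv p) x)) \<partial>M)"
      by (intro nn_integral_mono pw2)
    also have "\<dots> = (\<Sum>p\<in>Pt. (\<integral>\<^sup>+ x. ennreal K * (ennreal (norm (x - p)) * indicator (cv p) x) \<partial>M))"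
      using meas_g by (intro nn_integral_sum) auto
    also have "\<dots> = (\<Sum>p\<in>Pt. ennreal K * (\<integral>\<^sup>+ x. ennreal (norm (x - p)) * indicator (cv p) x \<partial>M))"
      using meas_g by (intro sum.cong refl nn_integral_cmult) auto
    finally show ?thesis .
  qed
  have Ip: "(\<integral>\<^sup>+ x. ennreal (norm (x - p)) * indicator (cv p) x \<partial>M) \<le> D * emeasure M (cv p)"
    if p: "p \<in> Pt" for p
  proof -
    obtain k where k: "k \<in> {1..b}" "p = xt k" using p unfolding Pt_def by blast
    have I: "(\<integral>\<^sup>+ x. ennreal (norm (x - p)) * indicator (cv p) x \<partial>M)
        = (\<integral>\<^sup>+ x \<in> coverage proj xt k. ennreal (norm (x - xt k)) \<partial>M)"
      using k cvk by simp
    show ?thesis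
    proof (cases "measure M (coverage proj xt k) > 0")
      case True
      hence kS: "k \<in> S" using k unfolding S_def by auto
      have fin: "finite S" unfolding S_def by simp
      have cd: "cond_dist M proj xt k \<le> D" unfolding D_def using fin kS by (simp add: Max_ge)
      have em: "emeasure M (coverage proj xt k) = ennreal (measure M (coverage proj xt k))"
        by (simp add: P.emeasure_eq_measure)
      have ne0: "emeasure M (coverage proj xt k) \<noteq> 0" using True em by simp
      have nt: "emeasure M (coverage proj xt k) \<noteq> top" using em by simp
      have "(\<integral>\<^sup>+ x \<in> coverage proj xt k. ennreal (norm (x - xt k)) \<partial>M)
          = cond_dist M proj xt k * emeasure M (coverage proj xt k)"
        unfolding cond_dist_def using ne0 nt
        by (simp add: ennreal_divide_times ennreal_divide_self[OF ne0 nt[unfolded top.not_eq_extremum, simplified]])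
      also have "\<dots> \<le> D * emeasure M (coverage proj xt k)" using cd by (intro mult_right_mono) auto
      finally show ?thesis using I k cvk by simp
    next
      case False
      hence "measure M (coverage proj xt k) = 0" using measure_nonneg[of M] by (metis less_eq_real_def)
      hence "coverage proj xt k \<in> null_sets M"
        using cov_meas[OF k(1)] by (simp add: P.emeasure_eq_measure null_sets_def)
      hence "(\<integral>\<^sup>+ x \<in> coverage proj xt k. ennreal (norm (x - xt k)) \<partial>M) = 0"
        by (rule nn_integral_null_set)
      thus ?thesis using I by simp
    qed
  qed
  have step3: "(\<Sum>p\<in>Pt. ennreal K * (\<integral>\<^sup>+ x. ennreal (norm (x - p)) * indicator (cv p) x \<partial>M))
      \<le> (\<Sum>p\<in>Pt. ennreal K * (D * emeasure M (cv p)))"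
    by (intro sum_mono mult_left_mono Ip) auto
  have sumM: "(\<Sum>p\<in>Pt. emeasure M (cv p)) \<le> 1"
  proof -
    have "(\<Sum>p\<in>Pt. emeasure M (cv p)) = emeasure M (\<Union>p\<in>Pt. cv p)"
      using cvmeas finP by (intro sum_emeasure) (auto simp: disjoint_family_on_def cv_def)
    also have "\<dots> \<le> 1" by (rule P.emeasure_le_1)
    finally show ?thesis .
  qed
  have step4: "(\<Sum>p\<in>Pt. ennreal K * (D * emeasure M (cv p))) \<le> ennreal K * D"
  proof -
    have "(\<Sum>p\<in>Pt. ennreal K * (D * emeasure M (cv p))) = ennreal K * D * (\<Sum>p\<in>Pt. emeasure M (cv p))"
      by (simp add: sum_distrib_left mult.assoc)
    also have "\<dots> \<le> ennreal K * D * 1" using sumM by (intro mult_left_mono) auto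
    finally show ?thesis by simp
  qed
  have "ennreal (integral\<^sup>L M ?f) \<le> ennreal K * D"
    using step1 step2 step3 step4 by (meson order_trans)
  then show ?thesis using pw unfolding K_def D_def S_def by blast
qed

end
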